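(* Let $N$ be a finite set of bidders with nonnegative bids, and for $T\subseteq N$ let $R(T)$ be the second-highest bid in $T$ ($0$ if $|T|\le 1$). Let $\mathbf{A}$ be the $n\times n$ matrix ($n=|N|$) with first column $0$, second column $(\tfrac12,\tfrac12,0,\dots,0)^T$, and, for $3\le j\le n$, $j$-th column with entries $-\frac{1}{j(j-1)}$ in rows $1,\dots,j-1$, $\frac1j$ in row $j$, and $0$ below. Let $\mathbf{b}$ be the vector of bids of $N$ sorted in decreasing order, and let the attribution of the bidder in sorted position $k$ be $(\mathbf{A}\mathbf{b})_k$. Then for each bidder $i\in N$ (with ties among equal bids broken arbitrarily in the sorting), its attribution equals its Shapley value in the cooperative game $(N,R)$: $$\sum_{T\subseteq N\setminus\{i\}} \frac{|T|!\,(|N|-|T|-1)!}{|N|!}\bigl(R(T\cup\{i\})-R(T)\bigr).$$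
   Context: The attribution $\mathbf{A}\mathbf{b}$ is the linear revenue attribution used by the paper's "Shapley's linear heuristic" for second-price auctions; $R$ is viewed as a characteristic function on subsets of bidders. *)

theory Defs
  imports Complex_Main "HOL-Library.Multiset"
begin

text \<open>Second-highest bid in T (0 if T has at most one bidder): the second entry of the
  bids of T sorted in decreasing order (as a multiset, so ties count twice).\<close>
definition second_price :: "('a \<Rightarrow> real) \<Rightarrow> 'a set \<Rightarrow> real" where
  "second_price b T =
     (if card T \<le> 1 then 0
      else rev (sorted_list_of_multiset (image_mset b (mset_set T))) ! 1)"

definition attrA :: "nat \<Rightarrow> nat \<Rightarrow> real" where
  "attrA i j =
     (if j = 1 then 0
      else if j = 2 then (if i \<le> 2 then 1/2 else 0)
      else if i < j then - 1 / (real j * (real j - 1))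
      else if i = j then 1 / real j
      else 0)"

definition shapley :: "'a set \<Rightarrow> ('a set \<Rightarrow> real) \<Rightarrow> 'a \<Rightarrow> real" where
  "shapley N v i =
     (\<Sum>T\<in>Pow (N - {i}).
        fact (card T) * fact (card N - card T - 1) / fact (card N) * (v (insert i T) - v T))"

end

theory Submission
  imports Defs
begin

lemma choose_sym: "(a+b) choose a = (a+b) choose (b::nat)"
  by (metis add_diff_cancel_left' binomial_symmetric le_add1)

lemma hs: "(\<Sum>v\<le>m. (Suc m - v) * ((v + d) choose d)) = (m + d + 2) choose (d + 2)"
proof (induction m)
  case 0 then show ?case by simp
next
  case (Suc m)
  have "(\<Sum>v\<le>Suc m. (Suc (Suc m) - v) * ((v + d) choose d))
      = (\<Sum>v\<le>Suc m. (Suc m - v) * ((v + d) choose d) + ((v + d) choose d))"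
    by (rule sum.cong) (auto simp: Suc_diff_le algebra_simps)
  also have "\<dots> = (\<Sum>v\<le>Suc m. (Suc m - v) * ((v + d) choose d)) + (\<Sum>v\<le>Suc m. (v + d) choose d)"
    by (simp add: sum.distrib)
  also have "(\<Sum>v\<le>Suc m. (Suc m - v) * ((v + d) choose d)) = (\<Sum>v\<le>m. (Suc m - v) * ((v + d) choose d))"
    by simp
  also have "(\<Sum>v\<le>Suc m. (v + d) choose d) = (\<Sum>v\<le>Suc m. (d + v) choose v)"
    by (rule sum.cong, simp, subst add.commute, rule choose_sym)
  also have "\<dots> = Suc (d + Suc m) choose Suc m" by (rule sum_choose_lower)
  also have "\<dots> = (m + d + 2) choose (d + 1)"
    using choose_sym[of "d+1" "Suc m"] by (simp add: algebra_simps)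
  finally show ?case using Suc.IH by simp
qed

lemma hs2: "(\<Sum>u\<le>m. (u + 1) * ((m - u + d) choose d)) = (m + d + 2) choose (d + 2)"
proof -
  have "(\<Sum>u\<le>m. (u + 1) * ((m - u + d) choose d)) = (\<Sum>v\<le>m. (Suc m - v) * ((v + d) choose d))"
    by (rule sum.reindex_bij_witness[where i="\<lambda>u. m - u" and j="\<lambda>u. m - u"]) auto
  then show ?thesis using hs by simp
qed

lemma term_id:
  assumes "u \<le> (m::nat)"
  shows "(m choose u) * fact (u+1) * fact (m - u + d) = fact m * fact d * ((u + 1) * ((m - u + d) choose d))"
proof -
  have A: "fact u * fact (m - u) * (m choose u) = (fact m :: nat)" using binomial_fact_lemma[OF assms] .
  have B: "fact d * fact (m - u) * ((m - u + d) choose d) = (fact (m - u + d) :: nat)"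
    using binomial_fact_lemma[of d "m - u + d"] by simp
  have "fact u * fact (m - u) * ((m choose u) * fact (u+1) * fact (m - u + d))
      = fact u * fact (m - u) * (fact m * fact d * ((u + 1) * ((m - u + d) choose d)))"
  proof -
    have "fact u * fact (m - u) * ((m choose u) * fact (u+1) * fact (m - u + d))
        = (fact u * fact (m - u) * (m choose u)) * fact (u+1) * fact (m - u + d)" by (simp add: ac_simps)
    also have "\<dots> = fact m * ((u+1) * fact u) * (fact d * fact (m - u) * ((m - u + d) choose d))"
      using A B by (simp add: ac_simps)
    also have "\<dots> = fact u * fact (m - u) * (fact m * fact d * ((u + 1) * ((m - u + d) choose d)))"
      by (simp add: algebra_simps)
    finally show ?thesis .
  qed
  moreover have "fact u * fact (m - u) \<noteq> (0::nat)" by simp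
  ultimately show ?thesis using mult_left_cancel by blast
qed

lemma nat_sum: "(\<Sum>u\<le>m. (m choose u) * fact (u+1) * fact (m - u + d)) = fact m * fact d * ((m + d + 2) choose (d + 2))"
proof -
  have "(\<Sum>u\<le>m. (m choose u) * fact (u+1) * fact (m - u + d)) = (\<Sum>u\<le>m. fact m * fact d * ((u + 1) * ((m - u + d) choose d)))"
    by (rule sum.cong, rule refl, rule term_id, simp)
  also have "\<dots> = fact m * fact d * (\<Sum>u\<le>m. (u + 1) * ((m - u + d) choose d))"
    by (simp add: sum_distrib_left)
  finally show ?thesis using hs2 by simp
qed

lemma key_real:
  "real (d+1) * (\<Sum>u\<le>m. real (m choose u) * (fact (u+1) * fact (m+d+2 - (u+1) - 1) / fact (m+d+2))) = 1 / real (d+2)"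
proof -
  define K :: nat where "K = fact d * fact m * ((m+d+2) choose (d+2))"
  have F: "fact (d+2) * fact m * ((m+d+2) choose (d+2)) = (fact (m+d+2) :: nat)"
    using binomial_fact_lemma[of "d+2" "m+d+2"] by simp
  have F2: "real (fact (m+d+2)) = real (d+2) * real (d+1) * real K"
    unfolding F[symmetric] K_def by (simp add: algebra_simps)
  have "(m+d+2) choose (d+2) > 0" by (rule zero_less_binomial) simp
  then have "K > 0" unfolding K_def by (simp only: nat_0_less_mult_iff fact_gt_zero)
  then have Kp: "real K > 0" by simp
  have "(\<Sum>u\<le>m. real (m choose u) * (fact (u+1) * fact (m+d+2 - (u+1) - 1) / fact (m+d+2)))
      = (\<Sum>u\<le>m. real ((m choose u) * fact (u+1) * fact (m - u + d))) / fact (m+d+2)"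
    by (simp add: sum_divide_distrib algebra_simps)
  also have "\<dots> = real K / real (fact (m+d+2))"
    by (simp only: of_nat_sum[symmetric] nat_sum of_nat_fact K_def mult.commute[of "fact m" "fact d"])
  also have "\<dots> = 1 / (real (d+2) * real (d+1))"
    unfolding F2 using Kp by (simp del: of_nat_add of_nat_Suc)
  finally have S: "(\<Sum>u\<le>m. real (m choose u) * (fact (u+1) * fact (m+d+2 - (u+1) - 1) / fact (m+d+2)))
      = 1 / (real (d+2) * real (d+1))" .
  have "real (d+1) \<noteq> 0" by simp
  then show ?thesis unfolding S by (simp del: of_nat_add of_nat_Suc)
qed


lemma sum_pow_card:
  assumes "finite A"
  shows "(\<Sum>U\<in>Pow A. f (card U)) = (\<Sum>u\<le>card A. real (card A choose u) * (f u :: real))"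
proof -
  have "(\<Sum>U\<in>Pow A. f (card U)) = (\<Sum>u\<le>card A. \<Sum>U\<in>{U. U \<in> Pow A \<and> card U = u}. f (card U))"
    by (rule sum.group[symmetric]) (use assms in \<open>auto intro: card_mono\<close>)
  also have "\<dots> = (\<Sum>u\<le>card A. \<Sum>U\<in>{U. U \<subseteq> A \<and> card U = u}. f u)"
    by (rule sum.cong) auto
  also have "\<dots> = (\<Sum>u\<le>card A. real (card A choose u) * f u)"
    using n_subsets[OF assms] by simp
  finally show ?thesis .
qed

lemma layer_in:
  assumes fin: "finite N" and SN: "S \<subseteq> N" and iS: "i \<in> S" and cS: "card S = d + 2"
  shows "shapley N (\<lambda>T. if 2 \<le> card (T \<inter> S) then 1 else 0) i = 1 / real (d + 2)"
proof -
  define n where "n = card N"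
  define m where "m = card (N - S)"
  have finS: "finite S" using fin SN finite_subset by blast
  have nm: "n = m + d + 2" unfolding n_def m_def using card_Diff_subset[OF finS SN] card_mono[OF fin SN] cS by simp
  define w :: "nat \<Rightarrow> real" where "w t = fact t * fact (n - t - 1) / fact n" for t
  have "shapley N (\<lambda>T. if 2 \<le> card (T \<inter> S) then 1 else 0) i
      = (\<Sum>T\<in>Pow (N - {i}). if card (T \<inter> S) = 1 then w (card T) else 0)"
    unfolding shapley_def n_def[symmetric]
  proof (rule sum.cong)
    fix T assume T: "T \<in> Pow (N - {i})"
    then have iT: "i \<notin> T" by auto
    have fT: "finite (T \<inter> S)" using finS by simp
    have "insert i T \<inter> S = insert i (T \<inter> S)" using iS by auto
    then have "card (insert i T \<inter> S) = Suc (card (T \<inter> S))" using fT iT by simp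
    then show "fact (card T) * fact (n - card T - 1) / fact n *
         ((if 2 \<le> card (insert i T \<inter> S) then 1 else 0) - (if 2 \<le> card (T \<inter> S) then 1 else 0))
         = (if card (T \<inter> S) = 1 then w (card T) else 0)"
      unfolding w_def by auto
  qed simp
  also have "\<dots> = (\<Sum>T\<in>{T \<in> Pow (N - {i}). card (T \<inter> S) = 1}. w (card T))"
    by (rule sum.inter_filter[symmetric]) (use fin in simp)
  also have "\<dots> = (\<Sum>p\<in>(S - {i}) \<times> Pow (N - S). w (card (insert (fst p) (snd p))))"
  proof (rule sum.reindex_bij_witness[where i="\<lambda>p. insert (fst p) (snd p)" and j="\<lambda>T. (the_elem (T \<inter> S), T - S)"])
    fix p assume p: "p \<in> (S - {i}) \<times> Pow (N - S)"
    then have e: "insert (fst p) (snd p) \<inter> S = {fst p}" by auto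
    show "(the_elem (insert (fst p) (snd p) \<inter> S), insert (fst p) (snd p) - S) = p"
      unfolding e the_elem_eq using p by auto
    show "insert (fst p) (snd p) \<in> {T \<in> Pow (N - {i}). card (T \<inter> S) = 1}"
      using p e SN iS by auto
  next
    fix T assume T: "T \<in> {T \<in> Pow (N - {i}). card (T \<inter> S) = 1}"
    then obtain s where s: "T \<inter> S = {s}" by (auto simp: card_1_singleton_iff)
    show "insert (fst (the_elem (T \<inter> S), T - S)) (snd (the_elem (T \<inter> S), T - S)) = T"
      using s by auto
    show "(the_elem (T \<inter> S), T - S) \<in> (S - {i}) \<times> Pow (N - S)"
      using s T by auto
  next
    fix T assume T: "T \<in> {T \<in> Pow (N - {i}). card (T \<inter> S) = 1}"
    then obtain s where s: "T \<inter> S = {s}" by (auto simp: card_1_singleton_iff)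
    have "insert (the_elem (T \<inter> S)) (T - S) = T" using s by auto
    then show "w (card (insert (fst (the_elem (T \<inter> S), T - S)) (snd (the_elem (T \<inter> S), T - S)))) = w (card T)" by simp
  qed
  also have "\<dots> = (\<Sum>s\<in>S - {i}. \<Sum>U\<in>Pow (N - S). w (card (insert s U)))"
    by (rule sum.cartesian_product[symmetric, unfolded split_def])
  also have "\<dots> = (\<Sum>s\<in>S - {i}. \<Sum>U\<in>Pow (N - S). w (card U + 1))"
  proof (rule sum.cong[OF refl], rule sum.cong[OF refl])
    fix s U assume "s \<in> S - {i}" "U \<in> Pow (N - S)"
    moreover have "finite U" using calculation(2) fin finite_subset by blast
    moreover have "s \<notin> U" using calculation by auto
    ultimately show "w (card (insert s U)) = w (card U + 1)" by simp
  qed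
  also have "\<dots> = real (d + 1) * (\<Sum>U\<in>Pow (N - S). w (card U + 1))"
    using cS iS finS by simp
  also have "\<dots> = real (d + 1) * (\<Sum>u\<le>m. real (m choose u) * w (u + 1))"
    unfolding m_def by (subst sum_pow_card) (use fin in auto)
  also have "\<dots> = 1 / real (d + 2)"
    unfolding w_def nm using key_real[of d m] by simp
  finally show ?thesis .
qed


lemma second_price_pos:
  fixes P :: "nat set" and \<sigma> :: "nat \<Rightarrow> 'a" and b :: "'a \<Rightarrow> real"
  assumes finP: "finite P" and inj: "inj_on \<sigma> P"
    and mono: "\<And>x y. x \<in> P \<Longrightarrow> y \<in> P \<Longrightarrow> x < y \<Longrightarrow> b (\<sigma> y) \<le> b (\<sigma> x)"
    and c2: "2 \<le> card P"
  shows "second_price b (\<sigma> ` P) = b (\<sigma> (sorted_list_of_set P ! 1))"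
proof -
  define ps where "ps = sorted_list_of_set P"
  have sw: "sorted_wrt (<) ps" unfolding ps_def by (rule strict_sorted_list_of_set)
  have sp: "set ps = P" "distinct ps" "length ps = card P" unfolding ps_def using finP by auto
  define ys where "ys = map (b \<circ> \<sigma>) ps"
  have "sorted_wrt (\<lambda>x y. b (\<sigma> y) \<le> b (\<sigma> x)) ps"
    by (rule sorted_wrt_mono_rel[OF _ sw]) (use mono sp in auto)
  then have s: "sorted (rev ys)" unfolding ys_def by (simp add: sorted_wrt_rev sorted_wrt_map)
  have "mset (rev ys) = image_mset (b \<circ> \<sigma>) (mset ps)" unfolding ys_def by simp
  also have "mset ps = mset_set P" using mset_set_set[OF sp(2)] sp(1) by simp
  also have "image_mset (b \<circ> \<sigma>) (mset_set P) = image_mset b (image_mset \<sigma> (mset_set P))"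
    by (simp add: multiset.map_comp)
  also have "image_mset \<sigma> (mset_set P) = mset_set (\<sigma> ` P)" by (rule image_mset_mset_set[OF inj])
  finally have m: "image_mset b (mset_set (\<sigma> ` P)) = mset (rev ys)" by simp
  have cT: "card (\<sigma> ` P) = card P" using card_image[OF inj] .
  have "second_price b (\<sigma> ` P) = rev (sorted_list_of_multiset (mset (rev ys))) ! 1"
    unfolding second_price_def m using cT c2 by simp
  also have "\<dots> = ys ! 1" unfolding sorted_list_of_multiset_mset sorted_sort_id[OF s] by simp
  also have "\<dots> = b (\<sigma> (ps ! 1))" unfolding ys_def using sp c2 by simp
  finally show ?thesis unfolding ps_def .
qed

lemma second_idx:
  fixes P :: "nat set"
  assumes finP: "finite P" and c2: "2 \<le> card P" and P0: "0 \<notin> P"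
  shows "2 \<le> card (P \<inter> {1..j}) \<longleftrightarrow> sorted_list_of_set P ! 1 \<le> j"
proof -
  define ps where "ps = sorted_list_of_set P"
  have sw: "sorted_wrt (<) ps" unfolding ps_def by (rule strict_sorted_list_of_set)
  have sp: "set ps = P" "length ps = card P" unfolding ps_def using finP by auto
  have lt: "ps ! 0 < ps ! 1" using sorted_wrt_nth_less[OF sw, of 0 1] sp c2 by simp
  have in0: "ps ! 0 \<in> P" and in1: "ps ! 1 \<in> P" using sp c2 nth_mem[of _ ps] by auto
  show ?thesis unfolding ps_def[symmetric]
  proof
    assume "ps ! 1 \<le> j"
    moreover have "ps ! 0 \<noteq> 0" using in0 P0 by metis
    moreover have "ps ! 1 \<noteq> 0" using in1 P0 by metis
    ultimately have "{ps ! 0, ps ! 1} \<subseteq> P \<inter> {1..j}" using in0 in1 lt by auto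
    then have "card {ps ! 0, ps ! 1} \<le> card (P \<inter> {1..j})" by (rule card_mono[rotated]) (use finP in simp)
    then show "2 \<le> card (P \<inter> {1..j})" using lt by simp
  next
    assume c: "2 \<le> card (P \<inter> {1..j})"
    show "ps ! 1 \<le> j"
    proof (rule ccontr)
      assume "\<not> ps ! 1 \<le> j"
      then have gt: "j < ps ! 1" by simp
      have "P \<inter> {1..j} \<subseteq> {ps ! 0}"
      proof
        fix x assume x: "x \<in> P \<inter> {1..j}"
        then obtain i where i: "i < length ps" "x = ps ! i" using sp(1) by (auto simp: in_set_conv_nth)
        show "x \<in> {ps ! 0}"
        proof (cases "i = 0")
          case False
          then have "ps ! 1 \<le> ps ! i"
            using sorted_wrt_nth_less[OF sw, of 1 i] i by (cases "i = 1") auto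
          then show ?thesis using x i gt by auto
        qed (use i in simp)
      qed
      then have "card (P \<inter> {1..j}) \<le> 1" using card_mono[of "{ps ! 0}"] by simp
      then show False using c by simp
    qed
  qed
qed

lemma layer_out:
  assumes "i \<notin> S"
  shows "shapley N (\<lambda>T. if 2 \<le> card (T \<inter> S) then 1 else 0) i = 0"
proof -
  have "\<And>T. insert i T \<inter> S = T \<inter> S" using assms by auto
  then show ?thesis unfolding shapley_def by simp
qed

lemma shapley_lin:
  "shapley N (\<lambda>T. \<Sum>j\<in>J. c j * g j T) i = (\<Sum>j\<in>J. c j * shapley N (g j) i)"
  unfolding shapley_def
  by (simp add: sum_subtractf[symmetric] sum_distrib_left sum_distrib_right algebra_simps sum.swap[of _ J])

lemma shapley_cong:
  assumes "i \<in> N" "\<And>T. T \<subseteq> N \<Longrightarrow> v T = v' T"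
  shows "shapley N v i = shapley N v' i"
  unfolding shapley_def
proof (intro sum.cong refl)
  fix T assume "T \<in> Pow (N - {i})"
  then have "T \<subseteq> N" "insert i T \<subseteq> N" using assms(1) by auto
  then show "fact (card T) * fact (card N - card T - 1) / fact (card N) * (v (insert i T) - v T) =
         fact (card T) * fact (card N - card T - 1) / fact (card N) * (v' (insert i T) - v' T)"
    using assms(2) by simp
qed

definition hh :: "nat \<Rightarrow> nat \<Rightarrow> real" where
  "hh k j = (if k \<le> j \<and> 2 \<le> j then 1 / real j else 0)"

lemma hh_step:
  assumes "1 \<le> n" "1 \<le> k"
  shows "hh k (Suc n) = attrA k (Suc n) + hh k n"
  using assms unfolding hh_def attrA_def
  by (auto simp: field_split_simps of_nat_diff add_nonneg_eq_0_iff)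

lemma telesc:
  assumes "1 \<le> n" "1 \<le> k"
  shows "(\<Sum>j=2..n. (\<beta> j - \<beta> (Suc j)) * hh k j) = (\<Sum>j=1..n. attrA k j * \<beta> j) - \<beta> (Suc n) * hh k n"
  using assms(1)
proof (induction n rule: nat_induct_at_least)
  case base then show ?case by (simp add: hh_def attrA_def)
next
  case (Suc n)
  have "(\<Sum>j=2..Suc n. (\<beta> j - \<beta> (Suc j)) * hh k j) = (\<Sum>j=2..n. (\<beta> j - \<beta> (Suc j)) * hh k j) + (\<beta> (Suc n) - \<beta> (Suc (Suc n))) * hh k (Suc n)"
    using Suc.hyps by (simp add: sum.nat_ivl_Suc')
  also have "\<dots> = (\<Sum>j=1..n. attrA k j * \<beta> j) - \<beta> (Suc n) * hh k n + (\<beta> (Suc n) - \<beta> (Suc (Suc n))) * (attrA k (Suc n) + hh k n)"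
    using Suc.IH hh_step[OF Suc.hyps assms(2)] by simp
  also have "\<dots> = (\<Sum>j=1..Suc n. attrA k j * \<beta> j) - \<beta> (Suc (Suc n)) * hh k (Suc n)"
    using Suc.hyps hh_step[OF Suc.hyps assms(2)] by (simp add: algebra_simps)
  finally show ?case .
qed


theorem mainTheorem4:
  fixes N :: "'a set" and b :: "'a \<Rightarrow> real" and \<sigma> :: "nat \<Rightarrow> 'a"
  assumes "finite N"
    and "\<And>i. i \<in> N \<Longrightarrow> b i \<ge> 0"
    and "bij_betw \<sigma> {1..card N} N"
    and "\<And>k l. k \<in> {1..card N} \<Longrightarrow> l \<in> {1..card N} \<Longrightarrow> k \<le> l \<Longrightarrow> b (\<sigma> l) \<le> b (\<sigma> k)"
    and "k \<in> {1..card N}"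
  shows "(\<Sum>j=1..card N. attrA k j * b (\<sigma> j)) = shapley N (second_price b) (\<sigma> k)"
proof -
  note fin = assms(1) and bij = assms(3) and mono = assms(4) and kin = assms(5)
  define n where "n = card N"
  define \<beta> where "\<beta> j = (if j \<le> n then b (\<sigma> j) else 0)" for j
  have inj: "inj_on \<sigma> {1..n}" and img: "\<sigma> ` {1..n} = N" using bij unfolding n_def bij_betw_def by auto
  have k1: "1 \<le> k" "k \<le> n" using kin unfolding n_def by auto
  have A: "second_price b T = (\<Sum>j=2..n. (\<beta> j - \<beta> (Suc j)) * (if 2 \<le> card (T \<inter> \<sigma> ` {1..j}) then 1 else 0))"
    if TN: "T \<subseteq> N" for T
  proof -
    define P where "P = {p \<in> {1..n}. \<sigma> p \<in> T}"
    have PT: "\<sigma> ` P = T" unfolding P_def using TN img by auto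
    have P1n: "P \<subseteq> {1..n}" unfolding P_def by auto
    have injP: "inj_on \<sigma> P" using inj_on_subset[OF inj P1n] .
    have finP: "finite P" using P1n finite_subset by blast
    have P0: "0 \<notin> P" using P1n by auto
    have cPT: "card T = card P" using card_image[OF injP] PT by simp
    have finT: "finite T" using PT finP by blast
    have cj: "card (T \<inter> \<sigma> ` {1..j}) = card (P \<inter> {1..j})" if "j \<le> n" for j
    proof -
      have "T \<inter> \<sigma> ` {1..j} = \<sigma> ` (P \<inter> {1..j})"
      proof
        show "T \<inter> \<sigma> ` {1..j} \<subseteq> \<sigma> ` (P \<inter> {1..j})"
        proof
          fix x assume "x \<in> T \<inter> \<sigma> ` {1..j}"
          then obtain p where "p \<in> {1..j}" "x = \<sigma> p" "x \<in> T" by auto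
          then show "x \<in> \<sigma> ` (P \<inter> {1..j})" unfolding P_def using that by auto
        qed
      qed (use PT in auto)
      then show ?thesis using card_image[OF inj_on_subset[OF injP]] by simp
    qed
    show ?thesis
    proof (cases "card P \<le> 1")
      case True
      have "second_price b T = 0" unfolding second_price_def using True cPT by simp
      moreover have "(if 2 \<le> card (T \<inter> \<sigma> ` {1..j}) then 1 else 0) = (0::real)" for j
        using card_mono[OF finT, of "T \<inter> \<sigma> ` {1..j}"] True cPT by auto
      ultimately show ?thesis by simp
    next
      case False
      then have c2: "2 \<le> card P" by simp
      define q where "q = sorted_list_of_set P ! 1"
      have sp: "second_price b T = b (\<sigma> q)"
        unfolding q_def PT[symmetric]
      proof (rule second_price_pos[OF finP injP _ c2])
        fix x y assume xy: "x \<in> P" "y \<in> P" "x < y"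
        then have "x \<in> {1..card N}" "y \<in> {1..card N}" using P1n unfolding n_def by auto
        then show "b (\<sigma> y) \<le> b (\<sigma> x)" using mono[of x y] xy(3) by simp
      qed
      have si: "2 \<le> card (P \<inter> {1..j}) \<longleftrightarrow> q \<le> j" for j
        unfolding q_def by (rule second_idx[OF finP c2 P0])
      have "P \<inter> {1..n} = P" using P1n by auto
      then have qn: "q \<le> n" using si[of n] c2 by simp
      have "card (P \<inter> {1..1}) \<le> card {1::nat}" by (rule card_mono) auto
      then have q2: "2 \<le> q" using si[of 1] by simp
      have "(\<Sum>j=2..n. (\<beta> j - \<beta> (Suc j)) * (if 2 \<le> card (T \<inter> \<sigma> ` {1..j}) then 1 else 0))
          = (\<Sum>j\<in>{2..n}. if q \<le> j then \<beta> j - \<beta> (Suc j) else 0)"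
      proof (rule sum.cong[OF refl])
        fix j assume j: "j \<in> {2..n}"
        then have "(2 \<le> card (T \<inter> \<sigma> ` {1..j})) = (q \<le> j)" using cj[of j] si[of j] by simp
        then show "(\<beta> j - \<beta> (Suc j)) * (if 2 \<le> card (T \<inter> \<sigma> ` {1..j}) then 1 else 0)
            = (if q \<le> j then \<beta> j - \<beta> (Suc j) else 0)" by simp
      qed
      also have "\<dots> = (\<Sum>j\<in>{j \<in> {2..n}. q \<le> j}. \<beta> j - \<beta> (Suc j))"
        by (rule sum.inter_filter[symmetric]) simp
      also have "{j \<in> {2..n}. q \<le> j} = {q..n}" using q2 by auto
      also have "(\<Sum>j=q..n. \<beta> j - \<beta> (Suc j)) = - (\<Sum>j=q..n. \<beta> (Suc j) - \<beta> j)"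
        by (simp add: sum_negf[symmetric])
      also have "\<dots> = \<beta> q - \<beta> (Suc n)" using sum_Suc_diff[of q n \<beta>] qn by simp
      also have "\<dots> = b (\<sigma> q)" unfolding \<beta>_def using qn by simp
      finally show ?thesis using sp by simp
    qed
  qed
  have sk: "\<sigma> k \<in> N" using img k1 by auto
  have "shapley N (second_price b) (\<sigma> k)
      = shapley N (\<lambda>T. \<Sum>j=2..n. (\<beta> j - \<beta> (Suc j)) * (if 2 \<le> card (T \<inter> \<sigma> ` {1..j}) then 1 else 0)) (\<sigma> k)"
    by (rule shapley_cong[OF sk]) (rule A)
  also have "\<dots> = (\<Sum>j=2..n. (\<beta> j - \<beta> (Suc j)) * shapley N (\<lambda>T. if 2 \<le> card (T \<inter> \<sigma> ` {1..j}) then 1 else 0) (\<sigma> k))"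
    by (rule shapley_lin)
  also have "\<dots> = (\<Sum>j=2..n. (\<beta> j - \<beta> (Suc j)) * hh k j)"
  proof (rule sum.cong[OF refl])
    fix j assume j: "j \<in> {2..n}"
    have injj: "inj_on \<sigma> {1..j}" using inj_on_subset[OF inj] j by auto
    have "shapley N (\<lambda>T. if 2 \<le> card (T \<inter> \<sigma> ` {1..j}) then 1 else 0) (\<sigma> k) = hh k j"
    proof (cases "k \<le> j")
      case True
      have "card (\<sigma> ` {1..j}) = (j - 2) + 2" using card_image[OF injj] j by (simp; arith)
      moreover have "\<sigma> ` {1..j} \<subseteq> N" using img j by auto
      moreover have "\<sigma> k \<in> \<sigma> ` {1..j}" using True k1 by auto
      ultimately have "shapley N (\<lambda>T. if 2 \<le> card (T \<inter> \<sigma> ` {1..j}) then 1 else 0) (\<sigma> k) = 1 / real ((j - 2) + 2)"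
        by (intro layer_in fin)
      then show ?thesis unfolding hh_def using True j by simp
    next
      case False
      have "\<sigma> k \<notin> \<sigma> ` {1..j}"
      proof
        assume "\<sigma> k \<in> \<sigma> ` {1..j}"
        then obtain p where p: "p \<in> {1..j}" "\<sigma> k = \<sigma> p" by auto
        then have "k = p" using inj_onD[OF inj p(2)] k1 j by auto
        then show False using p False by simp
      qed
      then show ?thesis unfolding hh_def using False by (simp add: layer_out)
    qed
    then show "(\<beta> j - \<beta> (Suc j)) * shapley N (\<lambda>T. if 2 \<le> card (T \<inter> \<sigma> ` {1..j}) then 1 else 0) (\<sigma> k)
          = (\<beta> j - \<beta> (Suc j)) * hh k j" by simp
  qed
  also have "\<dots> = (\<Sum>j=1..n. attrA k j * \<beta> j) - \<beta> (Suc n) * hh k n"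
    using telesc[of n k \<beta>] k1 by simp
  also have "\<dots> = (\<Sum>j=1..n. attrA k j * b (\<sigma> j))"
    unfolding \<beta>_def by simp
  finally show ?thesis unfolding n_def by simp
qed

end
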